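(* Let $n,m\ge2$ and $d\ge\max(n,m)-1$. Let $\mathcal U$ be a set of $n$ vectors forming an $(n-1)$-simplex ETF and $\mathcal V$ a set of $m$ vectors forming an $(m-1)$-simplex ETF, all on the unit sphere of $\mathbb R^d$. Let $\mathcal U\cup\mathcal V$ denote the collection of all $n+m$ vectors (concatenation, counted with multiplicity). Then $$\frac{1}{|\mathcal U\cup\mathcal V|\,(|\mathcal U\cup\mathcal V|-1)}\sum_{u\ne v\in\mathcal U\cup\mathcal V}u^\top v=-\frac{1}{n+m-1},$$ where the sum runs over ordered pairs of distinct members of the collection and $|\mathcal U\cup\mathcal V|=n+m$.
   Context: A set of $k$ vectors $W$ on the unit sphere of $\mathbb R^d$ is a $(k-1)$-simplex ETF if $\|w\|_2=1$ for all $w\in W$ and $w^\top w'=-\frac{1}{k-1}$ for all distinct $w,w'\in W$. *)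

theory Defs
  imports "HOL-Analysis.Analysis"
begin

definition simplex_ETF :: "(real^'d) set \<Rightarrow> nat \<Rightarrow> bool" where
  "simplex_ETF W k \<longleftrightarrow> finite W \<and> card W = k \<and> (\<forall>w\<in>W. norm w = 1) \<and>
     (\<forall>w\<in>W. \<forall>w'\<in>W. w \<noteq> w' \<longrightarrow> inner w w' = - 1 / (real k - 1))"

text \<open>The collection U \<union> V counted with multiplicity: the disjoint union U <+> V,
  whose members are mapped back to vectors by vec_of.\<close>
definition vec_of :: "'a + 'a \<Rightarrow> 'a" where
  "vec_of x = case_sum id id x"

end

theory Submission
  imports Defs
begin

lemma etf_sum_zero:
  fixes W :: "(real^'d) set"
  assumes "k \<ge> 2" "simplex_ETF W k"
  shows "sum id W = 0"
proof -
  have fin: "finite W" and cW: "card W = k" and n1: "\<forall>w\<in>W. norm w = 1"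
    and ip: "\<forall>w\<in>W. \<forall>w'\<in>W. w \<noteq> w' \<longrightarrow> inner w w' = - 1 / (real k - 1)"
    using assms(2) unfolding simplex_ETF_def by auto
  have k1: "real k - 1 \<noteq> 0" using assms(1) by simp
  have row: "(\<Sum>y\<in>W. inner x y) = 0" if x: "x \<in> W" for x
  proof -
    have "(\<Sum>y\<in>W. inner x y) = inner x x + (\<Sum>y\<in>W - {x}. inner x y)"
      using fin x by (simp add: sum_diff1)
    also have "(\<Sum>y\<in>W - {x}. inner x y) = (\<Sum>y\<in>W - {x}. - 1 / (real k - 1))"
      using ip x by (intro sum.cong) auto
    also have "\<dots> = - 1" using fin x cW k1 assms(1)
      by (simp add: card_Diff_singleton of_nat_diff)
    also have "inner x x = 1" using n1 x by (simp add: power2_norm_eq_inner[symmetric]) 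
    finally show ?thesis by simp
  qed
  have "inner (sum id W) (sum id W) = (\<Sum>x\<in>W. \<Sum>y\<in>W. inner x y)"
    by (simp add: inner_sum_left inner_sum_right) (rule sum.swap)
  also have "\<dots> = 0" using row by simp
  finally show ?thesis by simp
qed

theorem lemmaC14:
  fixes U V :: "(real^'d) set" and n m :: nat
  assumes "n \<ge> 2" and "m \<ge> 2" and "CARD('d) \<ge> max n m - 1"
    and "simplex_ETF U n" and "simplex_ETF V m"
  shows "1 / (real (card (U <+> V)) * (real (card (U <+> V)) - 1)) *
           (\<Sum>x\<in>U <+> V. \<Sum>y\<in>(U <+> V) - {x}. inner (vec_of x) (vec_of y))
         = - 1 / (real (n + m) - 1)"
proof -
  have fU: "finite U" and cU: "card U = n" and nU: "\<forall>w\<in>U. norm w = 1"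
    using assms(4) unfolding simplex_ETF_def by auto
  have fV: "finite V" and cV: "card V = m" and nV: "\<forall>w\<in>V. norm w = 1"
    using assms(5) unfolding simplex_ETF_def by auto
  have sU: "sum id U = 0" using etf_sum_zero assms(1,4) by blast
  have sV: "sum id V = 0" using etf_sum_zero assms(2,5) by blast
  let ?A = "U <+> V"
  have fA: "finite ?A" using fU fV by simp
  have cA: "card ?A = n + m" using fU fV cU cV by (simp add: card_Plus)
  have tot: "sum vec_of ?A = 0"
    using fU fV sU sV by (simp add: sum.Plus vec_of_def comp_def)
  have diag: "(\<Sum>x\<in>?A. inner (vec_of x) (vec_of x)) = real (n + m)"
  proof -
    have "(\<Sum>x\<in>?A. inner (vec_of x) (vec_of x)) = (\<Sum>x\<in>?A. 1)"
      using nU nV by (intro sum.cong) (auto simp: vec_of_def power2_norm_eq_inner[symmetric])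
    then show ?thesis using cA by simp
  qed
  have "(\<Sum>x\<in>?A. \<Sum>y\<in>?A - {x}. inner (vec_of x) (vec_of y))
      = (\<Sum>x\<in>?A. (\<Sum>y\<in>?A. inner (vec_of x) (vec_of y)) - inner (vec_of x) (vec_of x))"
    using fA by (intro sum.cong) (auto simp: sum_diff1)
  also have "\<dots> = inner (sum vec_of ?A) (sum vec_of ?A) - real (n + m)"
    using diag by (simp add: sum_subtractf inner_sum_left inner_sum_right) (rule sum.swap)
  also have "\<dots> = - real (n + m)" using tot by simp
  finally have S: "(\<Sum>x\<in>?A. \<Sum>y\<in>?A - {x}. inner (vec_of x) (vec_of y)) = - real (n + m)" .
  have pos: "real (n + m) - 1 \<noteq> 0" "real (n+m) \<noteq> 0" using assms(1,2) by auto
  have "1 / (real (n+m) * (real (n+m) - 1)) * (- real (n + m)) = - 1 / (real (n + m) - 1)"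
    using pos by (simp add: divide_simps)
  then show ?thesis unfolding S cA .
qed

end
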